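(* Let $\theta\in\mathbb{R}\setminus\mathbb{Q}$ with best rational approximants $(p_n/q_n)_{n\ge0}$, and let $q'$ be a subsequence of $(q_n)_{n\ge0}$. Then there exist $\mu\in\mathbb{R}$ and a dense $G_\delta$-subset $E_1$ of $l^\infty$ such that for every $u\in E_1$, the radius of convergence of the power series $\varphi_{\mu,q',u}$ equals $1$, and also the radius of convergence of $\varphi_{\mu,q'}$ (the series $\varphi_{\mu,q',u}$ for the constant sequence $u_m\equiv1$) equals $1$.
   Context: Best rational approximants $p_n/q_n$ of an irrational $\theta$ are its continued fraction convergents, with $\gcd(p_n,q_n)=1$, $q_n\ge0$. A subsequence $q'$ of $(q_n)$ means $q'_n=q_{k_n}$ with $k_n$ strictly increasing. $l^\infty$ is the complex Banach space of bounded complex sequences $u=(u_m)_{m\ge0}$ with the sup norm. For $\mu\in\mathbb{R}$ and $u\in l^\infty$, $\varphi_{\mu,q',u}(z)=z e^{2\pi i\mu}\sum_{n=0}^\infty u_{q'_n}(1-e^{2\pi i q'_n\mu})z^{q'_n}$, where $u_{q'_n}$ is the $q'_n$-th term of $u$. *)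

theory Defs
  imports "HOL-Analysis.Analysis"
begin

fun cf_rem :: "real \<Rightarrow> nat \<Rightarrow> real" where
  "cf_rem \<theta> 0 = \<theta>"
| "cf_rem \<theta> (Suc n) = 1 / frac (cf_rem \<theta> n)"

definition cf_a :: "real \<Rightarrow> nat \<Rightarrow> int" where
  "cf_a \<theta> n = \<lfloor>cf_rem \<theta> n\<rfloor>"

text \<open>Denominators of the convergents: q_0 = 1, q_1 = a_1, q_(n+2) = a_(n+2) q_(n+1) + q_n
  (for irrational theta, a_n >= 1 for n >= 1).\<close>

fun cf_q :: "real \<Rightarrow> nat \<Rightarrow> nat" where
  "cf_q \<theta> 0 = 1"
| "cf_q \<theta> (Suc 0) = nat (cf_a \<theta> 1)"
| "cf_q \<theta> (Suc (Suc n)) = nat (cf_a \<theta> (Suc (Suc n))) * cf_q \<theta> (Suc n) + cf_q \<theta> n"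

text \<open>Coefficient of z^m in
  phi_(mu,q',u)(z) = z e^(2 pi i mu) * sum_n u_(q'_n) (1 - e^(2 pi i q'_n mu)) z^(q'_n).\<close>

definition phi_coeff :: "real \<Rightarrow> (nat \<Rightarrow> nat) \<Rightarrow> (nat \<Rightarrow> complex) \<Rightarrow> nat \<Rightarrow> complex" where
  "phi_coeff \<mu> q' u m =
     exp (2 * pi * \<i> * complex_of_real \<mu>) *
     (\<Sum>n\<in>{n. q' n + 1 = m}. u (q' n) * (1 - exp (2 * pi * \<i> * of_nat (q' n) * complex_of_real \<mu>)))"

end

theory Submission imports Defs begin
lemma norm_1_minus_exp: "cmod (1 - exp (\<i> * complex_of_real y)) = 2 * \<bar>sin (y/2)\<bar>"
proof -
  have e: "exp (\<i> * complex_of_real y) = Complex (cos y) (sin y)"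
    by (simp add: exp_Euler cos_of_real sin_of_real Complex_eq)
  have c: "cos y = 1 - 2 * (sin (y/2))^2"
    using cos_double_sin[of "y/2"] by simp
  have "cmod (1 - exp (\<i> * complex_of_real y)) = sqrt ((1 - cos y)^2 + (sin y)^2)"
    by (simp add: e cmod_def)
  also have "(1 - cos y)^2 + (sin y)^2 = 2 - 2 * cos y"
    using sin_cos_squared_add[of y] by (simp add: power2_eq_square algebra_simps)
  also have "\<dots> = (2 * sin (y/2))^2" by (simp add: c power2_eq_square)
  finally show ?thesis by (simp only: real_sqrt_abs)
qed

lemma sin_lower: assumes "0 \<le> t" "t \<le> pi/2" shows "t/3 \<le> sin t"
proof -
  have "\<bar>sin t - (\<Sum>m<3. sin_coeff m * t ^ m)\<bar> \<le> inverse (fact 3) * \<bar>t\<bar> ^ 3"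
    by (rule Maclaurin_sin_bound)
  hence "\<bar>sin t - t\<bar> \<le> t^3/6" using assms
    by (simp add: sin_coeff_def numeral_3_eq_3 lessThan_Suc fact_numeral eval_nat_numeral)
  moreover have "t^2 \<le> 4"
  proof -
    have "t^2 \<le> (pi/2)^2" using assms by (intro power_mono) auto
    also have "\<dots> \<le> 2^2" using pi_less_4 by (intro power_mono) auto
    finally show ?thesis by simp
  qed
  moreover have "t^3 = t * t^2" by (simp add: power2_eq_square power3_eq_cube)
  ultimately have "t^3 \<le> 4 * t" using assms by (metis mult_left_mono mult.commute)
  with \<open>\<bar>sin t - t\<bar> \<le> t^3/6\<close> show ?thesis by linarith
qed
lemma no_sqrt2_nat: "(p::nat)^2 = 2 * q^2 \<Longrightarrow> q = 0"
proof (induction p arbitrary: q rule: less_induct)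
  case (less p)
  show ?case
  proof (cases "p = 0")
    case True with less.prems show ?thesis by simp
  next
    case False
    have "even (p^2)" using less.prems by simp
    hence "even p" by simp
    then obtain a where a: "p = 2 * a" by blast
    hence "q^2 = 2 * a^2" using less.prems by (simp add: power_mult_distrib)
    hence "even (q^2)" by simp
    hence "even q" by simp
    then obtain b where b: "q = 2 * b" by blast
    hence "a^2 = 2 * b^2" using \<open>q^2 = 2 * a^2\<close> by (simp add: power_mult_distrib)
    moreover have "a < p" using a False by simp
    ultimately have "b = 0" using less.IH by blast
    with b show ?thesis by simp
  qed
qed

lemma no_sqrt2_int: assumes "(q::nat) \<ge> 1" shows "(p::int)^2 \<noteq> 2 * (int q)^2"
proof
  assume h: "p^2 = 2 * (int q)^2"
  have "(nat \<bar>p\<bar>)^2 = 2 * q^2"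
  proof -
    have "int ((nat \<bar>p\<bar>)^2) = p^2" by simp
    also have "\<dots> = int (2 * q^2)" using h by simp
    finally show ?thesis by (simp only: of_nat_eq_iff)
  qed
  with no_sqrt2_nat assms show False by fastforce
qed

lemma exp_sqrt2_bound:
  assumes "(q::nat) \<ge> 1"
  shows "1 / (4 * real q) \<le> cmod (1 - exp (2 * pi * \<i> * of_nat q * complex_of_real (sqrt 2)))"
proof -
  define x where "x = real q * sqrt 2"
  define p where "p = round x"
  define d where "d = x - of_int p"
  have d2: "\<bar>d\<bar> \<le> 1/2" unfolding d_def p_def using of_int_round_abs_le[of x] by linarith
  have "2 * pi * \<i> * of_nat q * complex_of_real (sqrt 2)
      = \<i> * complex_of_real (2 * pi * d) + \<i> * (of_int p * (of_real pi * 2))"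
    by (simp add: d_def x_def algebra_simps)
  hence ex: "exp (2 * pi * \<i> * of_nat q * complex_of_real (sqrt 2)) = exp (\<i> * complex_of_real (2 * pi * d))"
    by (simp only: exp_plus_2pin)
  have nm: "cmod (1 - exp (2 * pi * \<i> * of_nat q * complex_of_real (sqrt 2))) = 2 * \<bar>sin (pi * d)\<bar>"
    unfolding ex norm_1_minus_exp by simp
  have sabs: "\<bar>sin (pi * d)\<bar> = sin (pi * \<bar>d\<bar>)"
  proof (cases "d \<ge> 0")
    case True
    then show ?thesis using sin_ge_zero[of "pi*d"] d2 by (simp add: mult_left_mono)
  next
    case False
    hence "sin (pi * \<bar>d\<bar>) = - sin (pi * d)" by simp
    moreover have "0 \<le> sin (pi * \<bar>d\<bar>)" using d2 by (intro sin_ge_zero) (auto simp: mult_left_le)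
    ultimately show ?thesis by linarith
  qed
  have "pi * \<bar>d\<bar> \<le> pi / 2" using d2 by (simp add: mult_left_mono[of _ "1/2" pi, simplified])
  hence sl: "pi * \<bar>d\<bar> / 3 \<le> sin (pi * \<bar>d\<bar>)" by (intro sin_lower) auto
  have "\<bar>d\<bar> * 3 \<le> pi * \<bar>d\<bar>" using pi_gt3 by (metis abs_ge_zero less_eq_real_def mult.commute mult_right_mono)
  hence "\<bar>d\<bar> \<le> pi * \<bar>d\<bar> / 3" by simp
  have x2: "x^2 = 2 * (real q)^2" by (simp add: x_def power_mult_distrib)
  have "p^2 \<noteq> 2 * (int q)^2" using no_sqrt2_int assms by blast
  hence "\<bar>2 * (int q)^2 - p^2\<bar> \<ge> 1" by linarith
  hence one: "1 \<le> \<bar>x^2 - (of_int p)^2\<bar>"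
  proof -
    assume "\<bar>2 * (int q)^2 - p^2\<bar> \<ge> 1"
    hence "1 \<le> \<bar>real_of_int (2 * (int q)^2 - p^2)\<bar>" by linarith
    thus ?thesis by (simp add: x2)
  qed
  have fact: "x^2 - (of_int p)^2 = d * (x + of_int p)" by (simp add: d_def power2_eq_square algebra_simps)
  have s2: "sqrt 2 \<le> 3/2" by (rule real_le_lsqrt) (auto simp: power2_eq_square)
  have "x \<ge> 0" by (simp add: x_def)
  have xp: "\<bar>x + of_int p\<bar> \<le> 4 * real q"
  proof -
    have "\<bar>x + of_int p\<bar> \<le> 2 * x + 1/2" using d2 \<open>x \<ge> 0\<close> unfolding d_def by linarith
    also have "x \<le> real q * (3/2)" unfolding x_def using s2 by (intro mult_left_mono) auto
    hence "2 * x + 1/2 \<le> 4 * real q" using assms by simp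
    finally show ?thesis .
  qed
  have "1 \<le> \<bar>d\<bar> * \<bar>x + of_int p\<bar>" using one fact by (simp add: abs_mult)
  also have "\<dots> \<le> \<bar>d\<bar> * (4 * real q)" using xp by (intro mult_left_mono) auto
  finally have "1 / (4 * real q) \<le> \<bar>d\<bar>" using assms by (simp add: field_simps)
  with sl \<open>\<bar>d\<bar> \<le> pi * \<bar>d\<bar> / 3\<close> sabs nm show ?thesis by linarith
qed

lemma conv_one:
  fixes Q :: "nat \<Rightarrow> nat" and f :: "nat \<Rightarrow> complex"
  assumes Qge: "\<And>n. n \<le> Q n" and Q1: "\<And>n. 1 \<le> Q n"
    and B: "\<And>m. norm (f m) \<le> B" and eps: "\<epsilon> > 0" "\<And>n. \<epsilon> \<le> norm (f (Q n))"
  shows "conv_radius (phi_coeff (sqrt 2) Q f) = 1"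
proof -
  define E where "E q = exp (2 * pi * \<i> * of_nat q * complex_of_real (sqrt 2))" for q :: nat
  define A where "A m = {n. Q n + 1 = m}" for m
  define c where "c = phi_coeff (sqrt 2) Q f"
  have Asub: "A m \<subseteq> {..m}" for m
  proof
    fix n assume "n \<in> A m"
    hence "Q n + 1 = m" by (simp add: A_def)
    with Qge[of n] show "n \<in> {..m}" by simp
  qed
  have finA: "finite (A m)" for m using Asub[of m] finite_subset by blast
  have coef: "c m = exp (2 * pi * \<i> * complex_of_real (sqrt 2)) * (of_nat (card (A m)) * (f (m-1) * (1 - E (m-1))))" for m
  proof -
    have "(\<Sum>n\<in>{n. Q n + 1 = m}. f (Q n) * (1 - exp (2 * pi * \<i> * of_nat (Q n) * complex_of_real (sqrt 2))))
        = (\<Sum>n\<in>A m. f (m-1) * (1 - E (m-1)))"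
      by (rule sum.cong) (auto simp: A_def E_def)
    also have "\<dots> = of_nat (card (A m)) * (f (m-1) * (1 - E (m-1)))" by simp
    finally show ?thesis by (simp add: c_def phi_coeff_def)
  qed
  have nE: "norm (E q) = 1" for q by (simp add: E_def)
  have nc: "norm (c m) = real (card (A m)) * (norm (f (m-1)) * norm (1 - E (m-1)))" for m
    by (simp add: coef norm_mult)
  have B0: "0 \<le> B" using B[of 0] norm_ge_zero order_trans by blast
  have up: "norm (c m) \<le> 2 * B * real (Suc m)" for m
  proof -
    have "card (A m) \<le> card {..m}"
      using Asub[of m] by (intro card_mono) auto
    hence cA: "real (card (A m)) \<le> real (Suc m)" by simp
    have "norm (1 - E (m-1)) \<le> 2" using norm_triangle_ineq4[of 1 "E (m-1)"] nE by simp
    hence "norm (f (m-1)) * norm (1 - E (m-1)) \<le> B * 2"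
      using B B0 by (intro mult_mono) auto
    hence "norm (c m) \<le> real (Suc m) * (B * 2)" unfolding nc
      using cA B0 by (intro mult_mono[OF cA]) auto
    thus ?thesis by (simp add: algebra_simps)
  qed
  have ge: "conv_radius c \<ge> 1"
  proof (rule conv_radius_geI_ex')
    fix r :: real assume r: "0 < r" "ereal r < 1"
    hence r1: "r < 1" by simp
    have "summable (\<lambda>n. diffs (\<lambda>_. 1::real) n * r ^ n)"
      by (rule termdiff_converges[of _ 1]) (use r r1 in \<open>auto intro: summable_geometric\<close>)
    hence s: "summable (\<lambda>n. 2 * B * (real (Suc n) * r ^ n))"
      by (intro summable_mult) (simp add: diffs_def)
    show "summable (\<lambda>n. c n * complex_of_real r ^ n)"
    proof (rule summable_norm_cancel, rule summable_comparison_test[OF _ s])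
      show "\<exists>N. \<forall>n\<ge>N. norm (norm (c n * complex_of_real r ^ n)) \<le> 2 * B * (real (Suc n) * r ^ n)"
      proof (intro exI allI impI)
        fix n :: nat
        have "norm (norm (c n * complex_of_real r ^ n)) = norm (c n) * r ^ n"
          using r by (simp add: norm_mult norm_power)
        also have "\<dots> \<le> 2 * B * real (Suc n) * r ^ n"
          using up[of n] r by (intro mult_right_mono) auto
        finally show "norm (norm (c n * complex_of_real r ^ n)) \<le> 2 * B * (real (Suc n) * r ^ n)"
          by (simp add: algebra_simps)
      qed
    qed
  qed
  have le: "conv_radius c \<le> 1"
  proof (rule conv_radius_leI_ex')
    fix r :: real assume r: "0 < r" "1 < ereal r"
    hence r1: "1 < r" by simp
    define \<delta> where "\<delta> = \<epsilon> * (r - 1) / 4"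
    have \<delta>: "\<delta> > 0" using eps r1 by (simp add: \<delta>_def)
    have low: "\<delta> \<le> norm (c (Q n + 1) * complex_of_real r ^ (Q n + 1))" for n
    proof -
      define q where "q = Q n"
      have q1: "1 \<le> q" using Q1 by (simp add: q_def)
      have "n \<in> A (q + 1)" by (simp add: A_def q_def)
      hence "card (A (q+1)) \<ge> 1" using finA[of "q+1"]
        by (metis One_nat_def Suc_leI card_gt_0_iff empty_iff)
      have eb: "1 / (4 * real q) \<le> norm (1 - E q)" unfolding E_def by (rule exp_sqrt2_bound[OF q1])
      have "\<epsilon> * (1 / (4 * real q)) \<le> norm (f q) * norm (1 - E q)"
        using eps(2)[of n] eb eps(1) by (intro mult_mono) (auto simp: q_def)
      also have "\<dots> \<le> real (card (A (q+1))) * (norm (f q) * norm (1 - E q))"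
      proof -
        have "1 * (norm (f q) * norm (1 - E q)) \<le> real (card (A (q+1))) * (norm (f q) * norm (1 - E q))"
          by (rule mult_right_mono) (use \<open>card (A (q+1)) \<ge> 1\<close> in auto)
        thus ?thesis by simp
      qed
      also have "\<dots> = norm (c (q + 1))" by (simp add: nc)
      finally have cl: "\<epsilon> / (4 * real q) \<le> norm (c (q+1))" by simp
      have "1 + real q * (r - 1) \<le> (1 + (r - 1)) ^ q" by (rule Bernoulli_inequality) (use r1 in auto)
      hence "real q * (r - 1) \<le> r ^ q" by simp
      also have "\<dots> \<le> r ^ (q+1)" using r1 by (intro power_increasing) auto
      finally have rb: "real q * (r - 1) \<le> r ^ (q+1)" .
      have "\<delta> = \<epsilon> / (4 * real q) * (real q * (r - 1))" using q1 by (simp add: \<delta>_def field_simps)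
      also have "\<dots> \<le> norm (c (q+1)) * r ^ (q+1)"
        using cl rb eps r1 q1 by (intro mult_mono) auto
      also have "\<dots> = norm (c (Q n + 1) * complex_of_real r ^ (Q n + 1))"
        using r by (simp add: norm_mult norm_power q_def)
      finally show ?thesis .
    qed
    show "\<not> summable (\<lambda>n. c n * complex_of_real r ^ n)"
    proof
      assume "summable (\<lambda>n. c n * complex_of_real r ^ n)"
      hence t: "(\<lambda>n. c n * complex_of_real r ^ n) \<longlonglongrightarrow> 0" by (rule summable_LIMSEQ_zero)
      have "filterlim (\<lambda>n. Q n + 1) at_top sequentially"
        unfolding filterlim_at_top
      proof
        fix Z :: nat
        show "eventually (\<lambda>n. Z \<le> Q n + 1) sequentially"
          using eventually_ge_at_top[of Z] by eventually_elim (use Qge le_SucI order_trans in fastforce)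
      qed
      from filterlim_compose[OF t this]
      have "(\<lambda>n. c (Q n + 1) * complex_of_real r ^ (Q n + 1)) \<longlonglongrightarrow> 0" .
      from tendstoD[OF this \<delta>] obtain N where "\<forall>n\<ge>N. dist (c (Q n + 1) * complex_of_real r ^ (Q n + 1)) 0 < \<delta>"
        by (auto simp: eventually_sequentially)
      hence "norm (c (Q N + 1) * complex_of_real r ^ (Q N + 1)) < \<delta>" by auto
      with low[of N] show False by simp
    qed
  qed simp
  from ge le show ?thesis by (simp add: c_def)
qed

lemma cf_rem_irrat: assumes "\<theta> \<notin> \<rat>" shows "cf_rem \<theta> n \<notin> \<rat>"
proof (induction n)
  case 0 then show ?case using assms by simp
next
  case (Suc n)
  define x where "x = cf_rem \<theta> n"
  have x: "x \<notin> \<rat>" using Suc by (simp add: x_def)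
  show ?case
  proof
    assume "cf_rem \<theta> (Suc n) \<in> \<rat>"
    hence "1 / frac x \<in> \<rat>" by (simp add: x_def)
    hence "1 / (1 / frac x) \<in> \<rat>" by (rule Rats_divide[OF Rats_1])
    hence "frac x \<in> \<rat>" by simp
    hence "of_int \<lfloor>x\<rfloor> + frac x \<in> \<rat>" by (intro Rats_add) auto
    hence "x \<in> \<rat>" by (simp add: frac_def)
    with x show False by contradiction
  qed
qed

lemma cf_a_pos: assumes "\<theta> \<notin> \<rat>" shows "cf_a \<theta> (Suc n) \<ge> 1"
proof -
  define x where "x = cf_rem \<theta> n"
  have x: "x \<notin> \<rat>" using cf_rem_irrat[OF assms] by (simp add: x_def)
  hence "x \<notin> \<int>" using Ints_subset_Rats by blast
  hence "frac x \<noteq> 0" by (simp add: frac_eq_0_iff)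
  hence f0: "0 < frac x" using frac_ge_0[of x] by linarith
  have f1: "frac x < 1" by (rule frac_lt_1)
  have "1 < 1 / frac x" using f0 f1 by (simp add: field_simps)
  hence "1 \<le> \<lfloor>1 / frac x\<rfloor>" by (simp add: le_floor_iff)
  thus ?thesis by (simp add: cf_a_def x_def)
qed

lemma cf_q_ge: assumes "\<theta> \<notin> \<rat>" shows "1 \<le> cf_q \<theta> n \<and> n \<le> cf_q \<theta> n"
proof -
  have "(1 \<le> cf_q \<theta> n \<and> n \<le> cf_q \<theta> n) \<and> (1 \<le> cf_q \<theta> (Suc n) \<and> Suc n \<le> cf_q \<theta> (Suc n))"
  proof (induction n)
    case 0
    have "1 \<le> cf_a \<theta> 1" using cf_a_pos[OF assms, of 0] by simp
    then show ?case by simp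
  next
    case (Suc n)
    have a: "1 \<le> nat (cf_a \<theta> (Suc (Suc n)))" using cf_a_pos[OF assms, of "Suc n"] by simp
    have "cf_q \<theta> (Suc (Suc n)) = nat (cf_a \<theta> (Suc (Suc n))) * cf_q \<theta> (Suc n) + cf_q \<theta> n" by simp
    moreover have "cf_q \<theta> (Suc n) \<le> nat (cf_a \<theta> (Suc (Suc n))) * cf_q \<theta> (Suc n)"
      using a by simp
    moreover from Suc.IH have "1 \<le> cf_q \<theta> n" "Suc n \<le> cf_q \<theta> (Suc n)" by auto
    ultimately show ?case by linarith
  qed
  thus ?thesis by blast
qed

theorem lemma2p3:
  fixes \<theta> :: real and k :: "nat \<Rightarrow> nat"
  assumes "\<theta> \<notin> \<rat>"
    and "strict_mono k"
  shows "\<exists>(\<mu>::real) (E1 :: (nat \<Rightarrow>\<^sub>C complex) set).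
           gdelta E1 \<and> closure E1 = UNIV \<and>
           (\<forall>u\<in>E1. conv_radius (phi_coeff \<mu> (cf_q \<theta> \<circ> k) (apply_bcontfun u)) = 1) \<and>
           conv_radius (phi_coeff \<mu> (cf_q \<theta> \<circ> k) (\<lambda>_. 1)) = 1"
proof -
  define Q where "Q = cf_q \<theta> \<circ> k"
  have Qge: "n \<le> Q n" for n
    using seq_suble[OF assms(2), of n] cf_q_ge[OF assms(1), of "k n"] by (simp add: Q_def)
  have Q1: "1 \<le> Q n" for n using cf_q_ge[OF assms(1), of "k n"] by (simp add: Q_def)
  define E1 where "E1 = {u :: nat \<Rightarrow>\<^sub>C complex. \<exists>\<epsilon>>0. \<forall>n. \<epsilon> \<le> norm (apply_bcontfun u (Q n))}"
  have op: "open E1"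
    unfolding open_dist
  proof
    fix u assume "u \<in> E1"
    then obtain \<epsilon> where e: "\<epsilon> > 0" "\<And>n. \<epsilon> \<le> norm (apply_bcontfun u (Q n))" by (auto simp: E1_def)
    show "\<exists>e>0. \<forall>y. dist y u < e \<longrightarrow> y \<in> E1"
    proof (intro exI[of _ "\<epsilon>/2"] conjI allI impI)
      fix v assume "dist v u < \<epsilon>/2"
      hence d: "dist (apply_bcontfun v m) (apply_bcontfun u m) < \<epsilon>/2" for m
        by (rule dist_fun_lt_imp_dist_val_lt)
      have "\<epsilon>/2 \<le> norm (apply_bcontfun v (Q n))" for n
        using d[of "Q n"] e(2)[of n] norm_triangle_ineq2[of "apply_bcontfun u (Q n)" "apply_bcontfun v (Q n)"]
        by (simp add: dist_norm norm_minus_commute)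
      thus "v \<in> E1" using e(1) unfolding E1_def by (intro CollectI exI[of _ "\<epsilon>/2"]) auto
    qed (use e in auto)
  qed
  have gd: "gdelta E1"
    using gdelta.intros[of "\<lambda>_. E1"] op by simp
  have cl: "closure E1 = UNIV"
  proof (intro set_eqI iffI)
    fix u :: "nat \<Rightarrow>\<^sub>C complex"
    show "u \<in> closure E1" unfolding closure_approachable
    proof (intro allI impI)
      fix e :: real assume e: "0 < e"
      define g where "g m = (if norm (apply_bcontfun u m) < e/4 then complex_of_real (e/2) else apply_bcontfun u m)" for m
      obtain B where B: "\<And>m. norm (apply_bcontfun u m) \<le> B"
        using bounded_apply_bcontfun[of u] unfolding bounded_iff by blast
      have "bounded (range g)" unfolding bounded_iff
        by (intro exI[of _ "max (e/2) B"]) (use B e in \<open>auto simp: g_def le_max_iff_disj\<close>)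
      hence gb: "g \<in> bcontfun" by (simp add: bcontfun_def)
      define v where "v = Bcontfun g"
      have va: "apply_bcontfun v = g" using gb by (simp add: v_def Bcontfun_inverse)
      have "v \<in> E1" unfolding E1_def
        by (intro CollectI exI[of _ "e/4"] conjI allI) (use e in \<open>auto simp: va g_def\<close>)
      moreover have "dist v u \<le> 3 * e / 4"
      proof (rule dist_bound)
        fix m
        show "dist (apply_bcontfun v m) (apply_bcontfun u m) \<le> 3 * e / 4"
        proof (cases "norm (apply_bcontfun u m) < e/4")
          case True
          have "dist (apply_bcontfun v m) (apply_bcontfun u m) \<le> norm (complex_of_real (e/2)) + norm (apply_bcontfun u m)"
            using True norm_triangle_ineq4[of "complex_of_real (e/2)" "apply_bcontfun u m"]
            by (simp add: va g_def dist_norm)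
          also have "\<dots> \<le> 3 * e / 4" using True e by simp
          finally show ?thesis .
        next
          case False then show ?thesis using e by (simp add: va g_def)
        qed
      qed
      ultimately show "\<exists>y\<in>E1. dist y u < e" using e by (intro bexI[of _ v]) auto
    qed
  qed simp
  have good: "\<forall>u\<in>E1. conv_radius (phi_coeff (sqrt 2) Q (apply_bcontfun u)) = 1"
  proof
    fix u assume "u \<in> E1"
    then obtain \<epsilon> where e: "\<epsilon> > 0" "\<And>n. \<epsilon> \<le> norm (apply_bcontfun u (Q n))" by (auto simp: E1_def)
    obtain B where B: "\<And>m. norm (apply_bcontfun u m) \<le> B"
      using bounded_apply_bcontfun[of u] unfolding bounded_iff by blast
    show "conv_radius (phi_coeff (sqrt 2) Q (apply_bcontfun u)) = 1"
      by (rule conv_one[of Q "apply_bcontfun u" B \<epsilon>]) (use Qge Q1 B e in auto)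
  qed
  have one: "conv_radius (phi_coeff (sqrt 2) Q (\<lambda>_. 1)) = 1"
    by (rule conv_one[OF Qge Q1, of _ 1 1]) auto
  show ?thesis
    by (intro exI[of _ "sqrt 2"] exI[of _ E1]) (use gd cl good one in \<open>simp add: Q_def\<close>)
qed

end
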